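(* The rational group $\mathcal{R}$ is full: every homeomorphism of $\{0,1\}^\omega$ that locally agrees with $\mathcal{R}$ belongs to $\mathcal{R}$.
   Context: An asynchronous binary transducer is $(S,s_0,t,o)$ with $S$ finite, $s_0\in S$, $t\colon S\times\{0,1\}\to S$, $o\colon S\times\{0,1\}\to\{0,1\}^*$. For a state $s$ and sequence $\sigma_1\sigma_2\cdots$ let $s_1=s$, $s_{n+1}=t(s_n,\sigma_n)$, and $o(s,\sigma_1\sigma_2\cdots)=o(s_1,\sigma_1)o(s_2,\sigma_2)\cdots$. A homeomorphism $f$ of $\{0,1\}^\omega$ is rational if some transducer satisfies $f(\psi)=o(s_0,\psi)$ for all $\psi\in\{0,1\}^\omega$; $\mathcal{R}$ is the group of rational homeomorphisms. A homeomorphism $h$ locally agrees with a group $G$ if every point has a neighborhood $U$ and some $g\in G$ with $h|_U=g|_U$. *)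

theory Defs
  imports "HOL-Analysis.Analysis"
begin

definition cantor :: "(nat \<Rightarrow> bool) topology" where
  "cantor = product_topology (\<lambda>_. discrete_topology (UNIV :: bool set)) (UNIV :: nat set)"

text \<open>State sequence: \<open>s_1 = s\<close>, \<open>s_{n+1} = t(s_n, \<sigma>_n)\<close> (indices shifted to start at 0).\<close>
primrec run :: "(nat \<Rightarrow> bool \<Rightarrow> nat) \<Rightarrow> nat \<Rightarrow> (nat \<Rightarrow> bool) \<Rightarrow> nat \<Rightarrow> nat" where
  "run t s \<psi> 0 = s"
| "run t s \<psi> (Suc n) = t (run t s \<psi> n) (\<psi> n)"

definition out_prefix :: "(nat \<Rightarrow> bool \<Rightarrow> nat) \<Rightarrow> (nat \<Rightarrow> bool \<Rightarrow> bool list) \<Rightarrow> nat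
    \<Rightarrow> (nat \<Rightarrow> bool) \<Rightarrow> nat \<Rightarrow> bool list" where
  "out_prefix t out s \<psi> n = concat (map (\<lambda>k. out (run t s \<psi> k) (\<psi> k)) [0..<n])"

text \<open>The (infinite) concatenation \<open>o(s,\<psi>)\<close> equals the infinite word w.\<close>
definition transduces :: "(nat \<Rightarrow> bool \<Rightarrow> nat) \<Rightarrow> (nat \<Rightarrow> bool \<Rightarrow> bool list) \<Rightarrow> nat
    \<Rightarrow> (nat \<Rightarrow> bool) \<Rightarrow> (nat \<Rightarrow> bool) \<Rightarrow> bool" where
  "transduces t out s \<psi> w \<longleftrightarrow>
     (\<forall>n. \<forall>i < length (out_prefix t out s \<psi> n). out_prefix t out s \<psi> n ! i = w i) \<and>
     (\<forall>m. \<exists>n. m \<le> length (out_prefix t out s \<psi> n))"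

text \<open>Rational homeomorphisms; states of a finite transducer are encoded as a finite set of naturals.\<close>
definition rational :: "((nat \<Rightarrow> bool) \<Rightarrow> (nat \<Rightarrow> bool)) \<Rightarrow> bool" where
  "rational f \<longleftrightarrow> homeomorphic_map cantor cantor f \<and>
     (\<exists>S s0 t out. finite S \<and> s0 \<in> S \<and> (\<forall>s\<in>S. \<forall>b. t s b \<in> S) \<and>
        (\<forall>\<psi>. transduces t out s0 \<psi> (f \<psi>)))"

definition rational_group :: "((nat \<Rightarrow> bool) \<Rightarrow> (nat \<Rightarrow> bool)) set" where
  "rational_group = {f. rational f}"

definition locally_agrees :: "((nat \<Rightarrow> bool) \<Rightarrow> (nat \<Rightarrow> bool)) \<Rightarrow> ((nat \<Rightarrow> bool) \<Rightarrow> (nat \<Rightarrow> bool)) set \<Rightarrow> bool" where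
  "locally_agrees h G \<longleftrightarrow> (\<forall>x. \<exists>U. openin cantor U \<and> x \<in> U \<and> (\<exists>g\<in>G. \<forall>y\<in>U. h y = g y))"

end

theory Submission
  imports Defs
begin

definition cyl :: "(nat \<Rightarrow> bool) \<Rightarrow> nat \<Rightarrow> (nat \<Rightarrow> bool) set" where
  "cyl x n = {y. \<forall>k<n. y k = x k}"

lemma topspace_cantor[simp]: "topspace cantor = UNIV"
  by (simp add: cantor_def)

lemma cyl_open: "openin cantor (cyl x n)"
proof -
  have eq: "cyl x n = PiE UNIV (\<lambda>k. if k < n then {x k} else UNIV)"
  proof (rule set_eqI)
    fix y
    show "y \<in> cyl x n \<longleftrightarrow> y \<in> PiE UNIV (\<lambda>k. if k < n then {x k} else UNIV)"
      unfolding cyl_def PiE_iff by (auto split: if_splits)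
  qed
  have "finite {k. (if k < n then {x k} else UNIV) \<noteq> (UNIV::bool set)}"
    by (rule finite_subset[of _ "{..<n}"]) auto
  then show ?thesis unfolding eq cantor_def
    by (subst openin_PiE_gen) auto
qed

lemma open_cyl:
  assumes "openin cantor U" "x \<in> U" shows "\<exists>n. cyl x n \<subseteq> U"
proof -
  obtain V where V: "finite {i. V i \<noteq> (UNIV::bool set)}" "x \<in> PiE UNIV V" "PiE UNIV V \<subseteq> U"
    using assms unfolding cantor_def openin_product_topology_alt by fastforce
  obtain n where n: "{i. V i \<noteq> UNIV} \<subseteq> {..<n}" using finite_nat_bounded[OF V(1)] by blast
  have "cyl x n \<subseteq> PiE UNIV V"
  proof
    fix y assume y: "y \<in> cyl x n"
    have "y i \<in> V i" for i
    proof (cases "V i = UNIV")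
      case False then have "i < n" using n by auto
      then show ?thesis using y V(2) by (auto simp: cyl_def PiE_def Pi_def)
    qed simp
    then show "y \<in> PiE UNIV V" by (auto simp: PiE_def)
  qed
  then show ?thesis using V(3) by blast
qed

lemma compact_cantor: "compact_space cantor"
  unfolding cantor_def
  by (subst compact_space_product_topology) (simp add: compact_space_discrete_topology)

lemma cyl_mono: "m \<le> n \<Longrightarrow> cyl x n \<subseteq> cyl x m"
  by (auto simp: cyl_def)

lemma cyl_same: "y \<in> cyl x n \<Longrightarrow> cyl y n = cyl x n"
  by (auto simp: cyl_def)

lemma uniform_N:
  assumes "locally_agrees h rational_group"
  shows "\<exists>N>0. \<forall>x. \<exists>g. rational g \<and> (\<forall>y\<in>cyl x N. h y = g y)"
proof -
  have "\<forall>x. \<exists>n g. rational g \<and> (\<forall>y\<in>cyl x n. h y = g y)"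
  proof
    fix x
    obtain U g where U: "openin cantor U" "x \<in> U" "g \<in> rational_group" "\<forall>y\<in>U. h y = g y"
      using assms unfolding locally_agrees_def by blast
    obtain n where "cyl x n \<subseteq> U" using open_cyl[OF U(1,2)] by blast
    then show "\<exists>n g. rational g \<and> (\<forall>y\<in>cyl x n. h y = g y)"
      using U(3,4) unfolding rational_group_def by blast
  qed
  then obtain nf gf where nf: "\<And>x. rational (gf x) \<and> (\<forall>y\<in>cyl x (nf x). h y = gf x y)"
    by metis
  have "compactin cantor (topspace cantor)" using compact_cantor compact_space_def by blast
  then obtain F where F: "finite F" "F \<subseteq> (\<lambda>x. cyl x (nf x)) ` UNIV" "UNIV \<subseteq> \<Union>F"
    unfolding compactin_def
    apply (elim conjE allE[of _ "(\<lambda>x. cyl x (nf x)) ` UNIV"])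
    using cyl_open by (auto simp: cyl_def)
  obtain X where X: "finite X" "F = (\<lambda>x. cyl x (nf x)) ` X"
    using F(1,2) finite_subset_image by metis
  define N where "N = Suc (Max (nf ` X \<union> {0}))"
  have "N > 0" by (simp add: N_def)
  moreover have "\<exists>g. rational g \<and> (\<forall>y\<in>cyl x N. h y = g y)" for x
  proof -
    obtain z where z: "z \<in> X" "x \<in> cyl z (nf z)" using F(3) X(2) by blast
    have "nf z \<le> N" using X(1) z(1) unfolding N_def
      by (simp add: le_SucI)
    then have "cyl x N \<subseteq> cyl z (nf z)" using cyl_mono cyl_same[OF z(2)] by blast
    then show ?thesis using nf[of z] by blast
  qed
  ultimately show ?thesis by blast
qed

lemma run_cong: "(\<forall>k<n. \<psi> k = \<phi> k) \<Longrightarrow> run t s \<psi> n = run t s \<phi> n"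
  by (induction n) auto

lemma out_prefix_Suc: "out_prefix t out s \<psi> (Suc n) = out_prefix t out s \<psi> n @ out (run t s \<psi> n) (\<psi> n)"
  by (simp add: out_prefix_def)

lemma out_prefix_0[simp]: "out_prefix t out s \<psi> 0 = []"
  by (simp add: out_prefix_def)

lemma out_prefix_cong: "(\<forall>k<n. \<psi> k = \<phi> k) \<Longrightarrow> out_prefix t out s \<psi> n = out_prefix t out s \<phi> n"
proof (induction n)
  case (Suc n)
  then show ?case using run_cong[of n \<psi> \<phi>] by (simp add: out_prefix_Suc)
qed simp

lemma out_prefix_len_mono: "n \<le> m \<Longrightarrow> length (out_prefix t out s \<psi> n) \<le> length (out_prefix t out s \<psi> m)"
proof (induction m rule: dec_induct)
  case (step m) then show ?case by (simp add: out_prefix_Suc)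
qed simp

lemma run_in: "s \<in> S \<Longrightarrow> \<forall>s\<in>S. \<forall>b. t s b \<in> S \<Longrightarrow> run t s \<psi> n \<in> S"
  by (induction n) auto

primrec runG :: "('a \<Rightarrow> bool \<Rightarrow> 'a) \<Rightarrow> 'a \<Rightarrow> (nat \<Rightarrow> bool) \<Rightarrow> nat \<Rightarrow> 'a" where
  "runG t s \<psi> 0 = s"
| "runG t s \<psi> (Suc n) = t (runG t s \<psi> n) (\<psi> n)"

definition opG :: "('a \<Rightarrow> bool \<Rightarrow> 'a) \<Rightarrow> ('a \<Rightarrow> bool \<Rightarrow> bool list) \<Rightarrow> 'a
    \<Rightarrow> (nat \<Rightarrow> bool) \<Rightarrow> nat \<Rightarrow> bool list" where
  "opG t out s \<psi> n = concat (map (\<lambda>k. out (runG t s \<psi> k) (\<psi> k)) [0..<n])"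

lemma opG_Suc: "opG t out s \<psi> (Suc n) = opG t out s \<psi> n @ out (runG t s \<psi> n) (\<psi> n)"
  by (simp add: opG_def)

lemma run_enc:
  fixes T :: "'a::countable \<Rightarrow> bool \<Rightarrow> 'a"
  shows "run (\<lambda>n b. to_nat (T (from_nat n) b)) (to_nat x) \<psi> n = to_nat (runG T x \<psi> n)"
  by (induction n) auto

lemma out_enc:
  fixes T :: "'a::countable \<Rightarrow> bool \<Rightarrow> 'a"
  shows "out_prefix (\<lambda>n b. to_nat (T (from_nat n) b)) (\<lambda>n b. Ou (from_nat n) b) (to_nat x) \<psi> n
       = opG T Ou x \<psi> n"
  unfolding out_prefix_def opG_def by (simp add: run_enc)

definition pre :: "(nat \<Rightarrow> bool) \<Rightarrow> nat \<Rightarrow> bool list" where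
  "pre \<psi> n = map \<psi> [0..<n]"

definition ext :: "bool list \<Rightarrow> nat \<Rightarrow> bool" where
  "ext u = (\<lambda>k. if k < length u then u ! k else False)"

lemma pre_Suc: "pre \<psi> (Suc n) = pre \<psi> n @ [\<psi> n]"
  by (simp add: pre_def)

lemma length_pre[simp]: "length (pre \<psi> n) = n"
  by (simp add: pre_def)

lemma ext_pre: "k < n \<Longrightarrow> ext (pre \<psi> n) k = \<psi> k"
  by (simp add: ext_def pre_def)

lemma combine:
  fixes SS :: "bool list \<Rightarrow> nat set" and s0 :: "bool list \<Rightarrow> nat"
    and tt :: "bool list \<Rightarrow> nat \<Rightarrow> bool \<Rightarrow> nat" and ouf :: "bool list \<Rightarrow> nat \<Rightarrow> bool \<Rightarrow> bool list"
  assumes N: "N > 0"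
    and A: "\<And>u. length u = N \<Longrightarrow> finite (SS u) \<and> s0 u \<in> SS u \<and> (\<forall>s\<in>SS u. \<forall>b. tt u s b \<in> SS u)
        \<and> (\<forall>\<psi>. pre \<psi> N = u \<longrightarrow> transduces (tt u) (ouf u) (s0 u) \<psi> (h \<psi>))"
  shows "\<exists>S s0 t out. finite S \<and> s0 \<in> S \<and> (\<forall>s\<in>S. \<forall>b. t s b \<in> S) \<and>
        (\<forall>\<psi>. transduces t out s0 \<psi> (h \<psi>))"
proof -
  define T :: "bool list \<times> nat \<Rightarrow> bool \<Rightarrow> bool list \<times> nat" where
    "T = (\<lambda>(u, s) b. if length u < N then
            (if Suc (length u) = N then (u @ [b], run (tt (u @ [b])) (s0 (u @ [b])) (ext (u @ [b])) N)
             else (u @ [b], 0))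
          else (u, tt u s b))"
  define Ou :: "bool list \<times> nat \<Rightarrow> bool \<Rightarrow> bool list" where
    "Ou = (\<lambda>(u, s) b. if length u < N then
            (if Suc (length u) = N then out_prefix (tt (u @ [b])) (ouf (u @ [b])) (s0 (u @ [b])) (ext (u @ [b])) N
             else [])
          else ouf u s b)"
  have R1: "n < N \<Longrightarrow> runG T ([], 0) \<psi> n = (pre \<psi> n, 0)" for \<psi> n
    by (induction n) (auto simp: T_def pre_Suc pre_def)
  have R2: "N \<le> n \<Longrightarrow> runG T ([], 0) \<psi> n = (pre \<psi> N, run (tt (pre \<psi> N)) (s0 (pre \<psi> N)) \<psi> n)" for \<psi> n
  proof (induction n rule: dec_induct)
    case base
    obtain m where m: "N = Suc m" using N gr0_implies_Suc by blast
    have "run (tt (pre \<psi> N)) (s0 (pre \<psi> N)) (ext (pre \<psi> N)) N = run (tt (pre \<psi> N)) (s0 (pre \<psi> N)) \<psi> N"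
      by (rule run_cong) (simp add: ext_pre)
    then show ?case using R1[of m \<psi>] by (simp add: m T_def pre_Suc)
  next
    case (step n)
    then show ?case by (simp add: T_def)
  qed
  have O1: "n \<le> N \<Longrightarrow> n < N \<Longrightarrow> opG T Ou ([], 0) \<psi> n = []" for \<psi> n
    by (induction n) (auto simp: opG_Suc R1 Ou_def opG_def)
  have O2: "N \<le> n \<Longrightarrow> opG T Ou ([], 0) \<psi> n = out_prefix (tt (pre \<psi> N)) (ouf (pre \<psi> N)) (s0 (pre \<psi> N)) \<psi> n" for \<psi> n
  proof (induction n rule: dec_induct)
    case base
    obtain m where m: "N = Suc m" using N gr0_implies_Suc by blast
    have "out_prefix (tt (pre \<psi> N)) (ouf (pre \<psi> N)) (s0 (pre \<psi> N)) (ext (pre \<psi> N)) N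
        = out_prefix (tt (pre \<psi> N)) (ouf (pre \<psi> N)) (s0 (pre \<psi> N)) \<psi> N"
      by (rule out_prefix_cong) (simp add: ext_pre)
    then show ?case using R1[of m \<psi>] O1[of m \<psi>] by (simp add: m opG_Suc Ou_def pre_Suc)
  next
    case (step n)
    then show ?case by (simp add: opG_Suc out_prefix_Suc R2 Ou_def)
  qed
  define S' where "S' = (\<lambda>u. (u, 0::nat)) ` {u. length u < N} \<union> (SIGMA u:{u. length u = N}. SS u)"
  have finL: "finite {u::bool list. length u < N}"
    using finite_lists_length_le[of "UNIV::bool set" N] by (rule rev_finite_subset) auto
  have finE: "finite {u::bool list. length u = N}"
    using finite_lists_length_le[of "UNIV::bool set" N] by (rule rev_finite_subset) auto
  have finS: "finite S'" unfolding S'_def using finL finE A by (auto intro!: finite_SigmaI)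
  have st: "([], 0) \<in> S'" unfolding S'_def using N by auto
  have cl: "\<forall>x\<in>S'. \<forall>b. T x b \<in> S'"
  proof (intro ballI allI)
    fix x b assume "x \<in> S'"
    then show "T x b \<in> S'"
    proof (cases rule: UnE[OF \<open>x \<in> S'\<close>[unfolded S'_def]])
      case 1
      then obtain u where u: "x = (u, 0)" "length u < N" by auto
      show ?thesis
      proof (cases "Suc (length u) = N")
        case True
        have "run (tt (u @ [b])) (s0 (u @ [b])) (ext (u @ [b])) N \<in> SS (u @ [b])"
          using A[of "u @ [b]"] True by (intro run_in) auto
        then show ?thesis using u True by (auto simp: T_def S'_def)
      next
        case False
        then show ?thesis using u by (auto simp: T_def S'_def)
      qed
    next
      case 2
      then obtain u s where "x = (u, s)" "length u = N" "s \<in> SS u" by auto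
      then show ?thesis using A[of u] by (auto simp: T_def S'_def)
    qed
  qed
  have tr: "transduces (\<lambda>n b. to_nat (T (from_nat n) b)) (\<lambda>n b. Ou (from_nat n) b) (to_nat ([]::bool list, 0::nat)) \<psi> (h \<psi>)"
    for \<psi>
  proof -
    let ?u = "pre \<psi> N"
    have g: "transduces (tt ?u) (ouf ?u) (s0 ?u) \<psi> (h \<psi>)" using A[of ?u] length_pre by blast
    show ?thesis unfolding transduces_def out_enc
    proof (intro conjI allI impI)
      fix n i assume i: "i < length (opG T Ou ([], 0) \<psi> n)"
      have "N \<le> n"
      proof (rule ccontr)
        assume "\<not> N \<le> n"
        then have "opG T Ou ([], 0) \<psi> n = []" by (intro O1) auto
        then show False using i by simp
      qed
      then have eq: "opG T Ou ([], 0) \<psi> n = out_prefix (tt ?u) (ouf ?u) (s0 ?u) \<psi> n" by (rule O2)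
      have "\<forall>i < length (out_prefix (tt ?u) (ouf ?u) (s0 ?u) \<psi> n). out_prefix (tt ?u) (ouf ?u) (s0 ?u) \<psi> n ! i = h \<psi> i"
        using g unfolding transduces_def by blast
      then show "opG T Ou ([], 0) \<psi> n ! i = h \<psi> i" using i unfolding eq by blast
    next
      fix m
      obtain n where "m \<le> length (out_prefix (tt ?u) (ouf ?u) (s0 ?u) \<psi> n)" using g unfolding transduces_def by blast
      then have "m \<le> length (out_prefix (tt ?u) (ouf ?u) (s0 ?u) \<psi> (max n N))"
        using out_prefix_len_mono[of n "max n N"] by (meson le_trans max.cobounded1)
      moreover have "opG T Ou ([], 0) \<psi> (max n N) = out_prefix (tt ?u) (ouf ?u) (s0 ?u) \<psi> (max n N)"
        by (rule O2) (rule max.cobounded2)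
      ultimately have "m \<le> length (opG T Ou ([], 0) \<psi> (max n N))" by (simp only:)
      then show "\<exists>n. m \<le> length (opG T Ou ([], 0) \<psi> n)" by (rule exI)
    qed
  qed
  have c1: "finite (to_nat ` S')" using finS by (rule finite_imageI)
  have c2: "to_nat ([]::bool list, 0::nat) \<in> to_nat ` S'" using st by (rule imageI)
  have c3: "\<forall>s\<in>to_nat ` S'. \<forall>b. to_nat (T (from_nat s) b) \<in> to_nat ` S'"
  proof (intro ballI allI)
    fix s b assume "s \<in> to_nat ` S'"
    then obtain x where x: "x \<in> S'" "s = to_nat x" by (rule imageE)
    then have "T x b \<in> S'" using cl by blast
    then show "to_nat (T (from_nat s) b) \<in> to_nat ` S'" using x(2) by simp
  qed
  show ?thesis
    apply (rule exI[of _ "to_nat ` S'"], rule exI[of _ "to_nat ([]::bool list, 0::nat)"],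
        rule exI[of _ "\<lambda>n b. to_nat (T (from_nat n) b)"], rule exI[of _ "\<lambda>n b. Ou (from_nat n) b"])
    apply (intro conjI allI)
       apply (rule c1)
      apply (rule c2)
     apply (rule c3)
    apply (rule tr)
    done
qed

theorem proposition2p3:
  assumes "homeomorphic_map cantor cantor h"
    and "locally_agrees h rational_group"
  shows "h \<in> rational_group"
proof -
  obtain N where N: "N > 0" "\<And>x. \<exists>g. rational g \<and> (\<forall>y\<in>cyl x N. h y = g y)"
    using uniform_N[OF assms(2)] by blast
  have e0: "\<forall>u. \<exists>S s0 t out. length u = N \<longrightarrow> (finite S \<and> s0 \<in> S \<and> (\<forall>s\<in>S. \<forall>b. t s b \<in> S)
        \<and> (\<forall>\<psi>. pre \<psi> N = u \<longrightarrow> transduces t out s0 \<psi> (h \<psi>)))"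
  proof
    fix u :: "bool list"
    obtain g where g: "rational g" "\<forall>y\<in>cyl (ext u) N. h y = g y" using N(2) by blast
    obtain S s0 t out where St: "finite S" "s0 \<in> S" "\<forall>s\<in>S. \<forall>b. t s b \<in> S"
      "\<forall>\<psi>. transduces t out s0 \<psi> (g \<psi>)"
      using g(1) unfolding rational_def by blast
    have "\<forall>\<psi>. pre \<psi> N = u \<longrightarrow> transduces t out s0 \<psi> (h \<psi>)"
    proof (intro allI impI)
      fix \<psi> assume "pre \<psi> N = u"
      then have "\<psi> \<in> cyl (ext u) N" unfolding cyl_def using ext_pre[of _ N \<psi>] by auto
      then show "transduces t out s0 \<psi> (h \<psi>)" using g(2) St(4) by auto
    qed
    then show "\<exists>S s0 t out. length u = N \<longrightarrow> (finite S \<and> s0 \<in> S \<and> (\<forall>s\<in>S. \<forall>b. t s b \<in> S)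
        \<and> (\<forall>\<psi>. pre \<psi> N = u \<longrightarrow> transduces t out s0 \<psi> (h \<psi>)))"
      using St by blast
  qed
  obtain SS where e1: "\<forall>u. \<exists>s0 t out. length u = N \<longrightarrow> (finite (SS u) \<and> s0 \<in> SS u \<and> (\<forall>s\<in>SS u. \<forall>b. t s b \<in> SS u)
        \<and> (\<forall>\<psi>. pre \<psi> N = u \<longrightarrow> transduces t out s0 \<psi> (h \<psi>)))"
    using choice[OF e0] by blast
  obtain s0 where e2: "\<forall>u. \<exists>t out. length u = N \<longrightarrow> (finite (SS u) \<and> s0 u \<in> SS u \<and> (\<forall>s\<in>SS u. \<forall>b. t s b \<in> SS u)
        \<and> (\<forall>\<psi>. pre \<psi> N = u \<longrightarrow> transduces t out (s0 u) \<psi> (h \<psi>)))"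
    using choice[OF e1] by blast
  obtain tt where e3: "\<forall>u. \<exists>out. length u = N \<longrightarrow> (finite (SS u) \<and> s0 u \<in> SS u \<and> (\<forall>s\<in>SS u. \<forall>b. tt u s b \<in> SS u)
        \<and> (\<forall>\<psi>. pre \<psi> N = u \<longrightarrow> transduces (tt u) out (s0 u) \<psi> (h \<psi>)))"
    using choice[OF e2] by blast
  obtain ouf where e4: "\<forall>u. length u = N \<longrightarrow> (finite (SS u) \<and> s0 u \<in> SS u \<and> (\<forall>s\<in>SS u. \<forall>b. tt u s b \<in> SS u)
        \<and> (\<forall>\<psi>. pre \<psi> N = u \<longrightarrow> transduces (tt u) (ouf u) (s0 u) \<psi> (h \<psi>)))"
    using choice[OF e3] by blast
  from e4 have "\<And>u. length u = N \<Longrightarrow> finite (SS u) \<and> s0 u \<in> SS u \<and> (\<forall>s\<in>SS u. \<forall>b. tt u s b \<in> SS u)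
        \<and> (\<forall>\<psi>. pre \<psi> N = u \<longrightarrow> transduces (tt u) (ouf u) (s0 u) \<psi> (h \<psi>))" by blast
  then have "\<exists>S s0 t out. finite S \<and> s0 \<in> S \<and> (\<forall>s\<in>S. \<forall>b. t s b \<in> S) \<and>
        (\<forall>\<psi>. transduces t out s0 \<psi> (h \<psi>))" by (rule combine[OF N(1)])
  then have "rational h" unfolding rational_def using assms(1) by (intro conjI)
  then show ?thesis unfolding rational_group_def by simp
qed

end
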